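(* The price of anarchy (supremum over all weights $w_1,w_2\ge0$ with $w_1+w_2>0$ and all instances, with respect to pure Nash equilibria) for symmetric simultaneous two-player weighted congestion games with affine costs and uniform cost functions is equal to $2$.
   Context: A weighted two-player congestion game with affine costs consists of a finite set $R$ of resources, coefficients $\alpha_r,\beta_r \geq 0$ for each $r\in R$, two players $i=1,2$ with weights $w_i\ge 0$, and for each player $i$ a nonempty finite set $\mathcal{A}_i \subseteq 2^R$ of actions; it is symmetric if $\mathcal{A}_1=\mathcal{A}_2$. For an action profile $A=(A_1,A_2)$ the load of $r$ is $x_r(A)=\sum_{j:\, r\in A_j} w_j$. With uniform costs, player $i$ pays $C_i(A)=\sum_{r\in A_i}(\alpha_r+\beta_r x_r(A))$. The social cost is $C(A)=C_1(A)+C_2(A)$. A pure Nash equilibrium is a profile from which no player can lower her cost by unilaterally changing her action. The price of anarchy of an instance is the maximum over Nash equilibria $A$ of $C(A)/\min_{A'} C(A')$; the price of anarchy of a class is the supremum over all instances (with positive optimal social cost). *)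

theory Defs
  imports Complex_Main "HOL-Library.Extended_Real"
begin

text \<open>Resources are labelled by natural numbers (any finite resource set can be relabelled).\<close>

record game =
  res   :: "nat set"
  alpha :: "nat \<Rightarrow> real"
  beta  :: "nat \<Rightarrow> real"
  w1    :: real
  w2    :: real
  acts  :: "nat set set"

definition valid_game :: "game \<Rightarrow> bool" where
  "valid_game G \<longleftrightarrow> finite (res G)
     \<and> (\<forall>r\<in>res G. alpha G r \<ge> 0 \<and> beta G r \<ge> 0)
     \<and> w1 G \<ge> 0 \<and> w2 G \<ge> 0 \<and> w1 G + w2 G > 0
     \<and> finite (acts G) \<and> acts G \<noteq> {} \<and> (\<forall>A\<in>acts G. A \<subseteq> res G)"

type_synonym profile = "nat set \<times> nat set"

definition load :: "game \<Rightarrow> profile \<Rightarrow> nat \<Rightarrow> real" where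
  "load G P r = (if r \<in> fst P then w1 G else 0) + (if r \<in> snd P then w2 G else 0)"

definition cost1 :: "game \<Rightarrow> profile \<Rightarrow> real" where
  "cost1 G P = (\<Sum>r\<in>fst P. alpha G r + beta G r * load G P r)"

definition cost2 :: "game \<Rightarrow> profile \<Rightarrow> real" where
  "cost2 G P = (\<Sum>r\<in>snd P. alpha G r + beta G r * load G P r)"

definition social_cost :: "game \<Rightarrow> profile \<Rightarrow> real" where
  "social_cost G P = cost1 G P + cost2 G P"

definition profiles :: "game \<Rightarrow> profile set" where
  "profiles G = acts G \<times> acts G"

definition pure_NE :: "game \<Rightarrow> profile \<Rightarrow> bool" where
  "pure_NE G P \<longleftrightarrow> P \<in> profiles G
     \<and> (\<forall>B\<in>acts G. cost1 G P \<le> cost1 G (B, snd P))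
     \<and> (\<forall>B\<in>acts G. cost2 G P \<le> cost2 G (fst P, B))"

definition opt_cost :: "game \<Rightarrow> real" where
  "opt_cost G = Min (social_cost G ` profiles G)"

definition poa_instance :: "game \<Rightarrow> ereal" where
  "poa_instance G = (SUP P\<in>{P. pure_NE G P}. ereal (social_cost G P / opt_cost G))"

definition poa_class :: ereal where
  "poa_class = (SUP G\<in>{G. valid_game G \<and> opt_cost G > 0}. poa_instance G)"

end

theory Submission
  imports Defs
begin

definition G0 :: game where
  "G0 = \<lparr>res = {0,1}, alpha = (\<lambda>r. if r = 1 then 1 else 0),
         beta = (\<lambda>r. if r = 0 then 1 else 0), w1 = 1, w2 = 0,
         acts = {{0},{1}}\<rparr>"

lemma G0_valid: "valid_game G0"
  by (simp add: valid_game_def G0_def)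

lemma G0_profiles: "profiles G0 = {({0},{0}),({0},{1}),({1},{0}),({1},{1})}"
  by (auto simp: profiles_def G0_def)

lemma G0_opt: "opt_cost G0 = 1"
  unfolding opt_cost_def G0_profiles
  by (simp add: social_cost_def cost1_def cost2_def load_def G0_def)

lemma G0_NE: "pure_NE G0 ({0},{0})"
  unfolding pure_NE_def G0_profiles by (simp add: cost1_def cost2_def load_def G0_def)

lemma G0_sc: "social_cost G0 ({0},{0}) = 2"
  by (simp add: social_cost_def cost1_def cost2_def load_def G0_def)

lemma lower: "2 \<le> poa_class"
proof -
  have "ereal (social_cost G0 ({0},{0}) / opt_cost G0) \<le> poa_instance G0"
    unfolding poa_instance_def using G0_NE by (intro SUP_upper) auto
  moreover have "poa_instance G0 \<le> poa_class"
    unfolding poa_class_def using G0_valid G0_opt by (intro SUP_upper) auto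
  ultimately show ?thesis using G0_sc G0_opt by simp
qed

lemma dev1_bound:
  assumes "valid_game G" "B \<in> acts G"
  shows "cost1 G (B, A2) \<le> (\<Sum>r\<in>B. alpha G r + beta G r * (w1 G + w2 G))"
  unfolding cost1_def fst_conv
proof (rule sum_mono)
  fix r assume r: "r \<in> B"
  have "r \<in> res G" using assms r unfolding valid_game_def by auto
  hence "beta G r \<ge> 0" using assms unfolding valid_game_def by auto
  moreover have "load G (B, A2) r \<le> w1 G + w2 G" using assms unfolding valid_game_def load_def by auto
  ultimately show "alpha G r + beta G r * load G (B, A2) r \<le> alpha G r + beta G r * (w1 G + w2 G)"
    by (simp add: mult_left_mono)
qed

lemma dev2_bound:
  assumes "valid_game G" "B \<in> acts G"
  shows "cost2 G (A1, B) \<le> (\<Sum>r\<in>B. alpha G r + beta G r * (w1 G + w2 G))"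
  unfolding cost2_def snd_conv
proof (rule sum_mono)
  fix r assume r: "r \<in> B"
  have "r \<in> res G" using assms r unfolding valid_game_def by auto
  hence "beta G r \<ge> 0" using assms unfolding valid_game_def by auto
  moreover have "load G (A1, B) r \<le> w1 G + w2 G" using assms unfolding valid_game_def load_def by auto
  ultimately show "alpha G r + beta G r * load G (A1, B) r \<le> alpha G r + beta G r * (w1 G + w2 G)"
    by (simp add: mult_left_mono)
qed

lemma opt_lower:
  assumes "valid_game G" "O1 \<in> acts G" "O2 \<in> acts G"
  shows "(\<Sum>r\<in>O1. alpha G r + beta G r * w1 G) + (\<Sum>r\<in>O2. alpha G r + beta G r * w2 G)
         \<le> social_cost G (O1, O2)"
proof -
  have "(\<Sum>r\<in>O1. alpha G r + beta G r * w1 G) \<le> cost1 G (O1, O2)"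
    unfolding cost1_def fst_conv
  proof (rule sum_mono)
    fix r assume r: "r \<in> O1"
    have "r \<in> res G" using assms r unfolding valid_game_def by auto
    hence "beta G r \<ge> 0" using assms unfolding valid_game_def by auto
    moreover have "w1 G \<le> load G (O1, O2) r" using assms r unfolding valid_game_def load_def by auto
    ultimately show "alpha G r + beta G r * w1 G \<le> alpha G r + beta G r * load G (O1, O2) r"
      by (simp add: mult_left_mono)
  qed
  moreover have "(\<Sum>r\<in>O2. alpha G r + beta G r * w2 G) \<le> cost2 G (O1, O2)"
    unfolding cost2_def snd_conv
  proof (rule sum_mono)
    fix r assume r: "r \<in> O2"
    have "r \<in> res G" using assms r unfolding valid_game_def by auto
    hence "beta G r \<ge> 0" using assms unfolding valid_game_def by auto
    moreover have "w2 G \<le> load G (O1, O2) r" using assms r unfolding valid_game_def load_def by auto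
    ultimately show "alpha G r + beta G r * w2 G \<le> alpha G r + beta G r * load G (O1, O2) r"
      by (simp add: mult_left_mono)
  qed
  ultimately show ?thesis unfolding social_cost_def by linarith
qed

lemma scale_bound:
  assumes "valid_game G" "S \<in> acts G" "w \<ge> 0" "w \<le> w1 G + w2 G"
  shows "w * (\<Sum>r\<in>S. alpha G r + beta G r * (w1 G + w2 G))
         \<le> (w1 G + w2 G) * (\<Sum>r\<in>S. alpha G r + beta G r * w)"
  unfolding sum_distrib_left
proof (rule sum_mono)
  fix r assume r: "r \<in> S"
  have "r \<in> res G" using assms r unfolding valid_game_def by auto
  hence "alpha G r \<ge> 0" using assms unfolding valid_game_def by auto
  hence "w * alpha G r \<le> (w1 G + w2 G) * alpha G r" using assms by (simp add: mult_right_mono)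
  thus "w * (alpha G r + beta G r * (w1 G + w2 G)) \<le> (w1 G + w2 G) * (alpha G r + beta G r * w)"
    by (simp add: algebra_simps)
qed

lemma NE_bound:
  assumes v: "valid_game G" and ne: "pure_NE G P" and O1: "O1 \<in> acts G" and O2: "O2 \<in> acts G"
  shows "social_cost G P \<le> 2 * social_cost G (O1, O2)"
proof -
  obtain A1 A2 where P: "P = (A1, A2)" by fastforce
  let ?u = "w1 G" and ?v = "w2 G"
  define D where "D B = (\<Sum>r\<in>B. alpha G r + beta G r * (?u + ?v))" for B
  have u: "?u \<ge> 0" and vv: "?v \<ge> 0" and uv: "?u + ?v > 0" using v unfolding valid_game_def by auto
  have c1a: "cost1 G P \<le> D O1" and c1b: "cost1 G P \<le> D O2"
    using ne dev1_bound[OF v O1, of A2] dev1_bound[OF v O2, of A2] O1 O2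
    unfolding pure_NE_def P D_def by force+
  have c2a: "cost2 G P \<le> D O1" and c2b: "cost2 G P \<le> D O2"
    using ne dev2_bound[OF v O1, of A1] dev2_bound[OF v O2, of A1] O1 O2
    unfolding pure_NE_def P D_def by force+
  have "(?u + ?v) * cost1 G P \<le> ?u * D O1 + ?v * D O2"
    using mult_left_mono[OF c1a u] mult_left_mono[OF c1b vv] by (simp add: algebra_simps)
  moreover have "(?u + ?v) * cost2 G P \<le> ?u * D O1 + ?v * D O2"
    using mult_left_mono[OF c2a u] mult_left_mono[OF c2b vv] by (simp add: algebra_simps)
  moreover have "?u * D O1 \<le> (?u + ?v) * (\<Sum>r\<in>O1. alpha G r + beta G r * ?u)"
    unfolding D_def using scale_bound[OF v O1 u] vv by simp
  moreover have "?v * D O2 \<le> (?u + ?v) * (\<Sum>r\<in>O2. alpha G r + beta G r * ?v)"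
    unfolding D_def using scale_bound[OF v O2 vv] u by simp
  moreover have "(?u + ?v) * ((\<Sum>r\<in>O1. alpha G r + beta G r * ?u) + (\<Sum>r\<in>O2. alpha G r + beta G r * ?v))
      \<le> (?u + ?v) * social_cost G (O1, O2)"
    using opt_lower[OF v O1 O2] uv by (intro mult_left_mono) auto
  ultimately have "(?u + ?v) * social_cost G P \<le> (?u + ?v) * (2 * social_cost G (O1, O2))"
    unfolding social_cost_def[of G P] by (simp add: algebra_simps)
  thus ?thesis using uv by simp
qed

lemma upper_inst:
  assumes v: "valid_game G" and pos: "opt_cost G > 0"
  shows "poa_instance G \<le> 2"
  unfolding poa_instance_def
proof (rule SUP_least)
  fix P assume "P \<in> {P. pure_NE G P}"
  hence ne: "pure_NE G P" by simp
  have fin: "finite (social_cost G ` profiles G)" using v unfolding valid_game_def profiles_def by auto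
  have ne2: "social_cost G ` profiles G \<noteq> {}" using v unfolding valid_game_def profiles_def by auto
  have "opt_cost G \<in> social_cost G ` profiles G" unfolding opt_cost_def using Min_in[OF fin ne2] .
  then obtain O1 O2 where O: "O1 \<in> acts G" "O2 \<in> acts G" "opt_cost G = social_cost G (O1, O2)"
    unfolding profiles_def by auto
  have "social_cost G P \<le> 2 * opt_cost G" using NE_bound[OF v ne O(1,2)] O(3) by simp
  hence "social_cost G P / opt_cost G \<le> 2" using pos by (simp add: divide_le_eq)
  thus "ereal (social_cost G P / opt_cost G) \<le> 2" by simp
qed

theorem corollary3:
  shows "poa_class = 2"
proof (rule antisym)
  show "poa_class \<le> 2" unfolding poa_class_def
    by (rule SUP_least) (use upper_inst in auto)
  show "2 \<le> poa_class" by (rule lower)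
qed

end
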